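(* Let $A$ be an infinite set, fix $z\in A$, $A'=A\setminus\{z\}$, and $p\in[1,\infty)$. Let $\alpha^n=a_1^na_2^n\ldots\in N(A)$ for $n\in\mathbb{N}^*$, $x_n=p_p(\alpha^n)$, and let $\alpha=a_1a_2\ldots\in N(A)$, $x=p_p(\alpha)$. (i) If the sequence $(a_n)_{n\in\mathbb{N}^*}$ is not eventually constant (for every $q\in\mathbb{N}^*$ it is not constant from index $q$ on), then $\lim_{n\to\infty}\|x_n-x\|_p=0$ if and only if $\lim_{n\to\infty}\alpha^n=\alpha$ in $N(A)$. (ii) If there are $n_0\in\mathbb{N}^*$, $n_0\ge2$, and $a,b\in A$, $a\neq b$, with $\alpha=a_1\ldots a_{n_0-1}abbb\ldots$ (the $n_0$-th letter is $a$ and all later letters are $b$), then $\lim_{n\to\infty}\|x_n-x\|_p=0$ if and only if for every $m\in\mathbb{N}^*$ with $m>n_0+1$ there exists $l_m\in\mathbb{N}^*$ such that for every $l\ge l_m$ one of the following holds: ($\alpha$) $a_i^l=a_i$ for $i=1,\ldots,n_0-1$, $a_{n_0}^l=a$, and $a_{n_0+1}^l=\cdots=a_m^l=b$; ($\beta$) $a_i^l=a_i$ for $i=1,\ldots,n_0-1$, $a_{n_0}^l=b$, and $a_{n_0+1}^l=\cdots=a_m^l=a$.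
   Context: $l^p(A)$ is the set of families $x=(x_c)_{c\in A'}$ of real numbers with $x_c=0$ for all but countably many $c$ and $\sum_c|x_c|^p<\infty$, with norm $\|x\|_p=(\sum_c|x_c|^p)^{1/p}$. $N(A)$ is the set of all sequences $\alpha=a_1a_2a_3\ldots$ with $a_k\in A$, with metric $d(v,v')=1/k$ where $k$ is the first index at which $v,v'$ differ, and $d(v,v)=0$. The map $p_p:N(A)\to l^p(A)$ is $p_p(\alpha)=(\alpha_c)_{c\in A'}$ where, for $\alpha=a_1a_2\ldots$, $\alpha_c=\sum_{k:\,a_k=c}2^{-k}$ (and $\alpha_c=0$ if no $a_k$ equals $c$). *)

theory Defs
  imports "HOL-Analysis.Analysis"
begin

text \<open>Words in N(A) are represented as functions nat => 'a; only the letters at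
  positions k >= 1 are meaningful (alpha = a_1 a_2 a_3 ...).\<close>

definition inN :: "'a set \<Rightarrow> (nat \<Rightarrow> 'a) \<Rightarrow> bool" where
  "inN A v \<longleftrightarrow> (\<forall>k\<ge>1. v k \<in> A)"

definition dN :: "(nat \<Rightarrow> 'a) \<Rightarrow> (nat \<Rightarrow> 'a) \<Rightarrow> real" where
  "dN v w = (if \<forall>k\<ge>1. v k = w k then 0
             else 1 / real (LEAST k. 1 \<le> k \<and> v k \<noteq> w k))"

definition coordN :: "(nat \<Rightarrow> 'a) \<Rightarrow> 'a \<Rightarrow> real" where
  "coordN v c = (\<Sum>k. if 1 \<le> k \<and> v k = c then (1/2) ^ k else 0)"

text \<open>p_p(alpha) = (alpha_c)_{c in A'}, as a family indexed by A' = A - {z}.\<close>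

definition pmap :: "(nat \<Rightarrow> 'a) \<Rightarrow> 'a \<Rightarrow> real" where
  "pmap v = (\<lambda>c. coordN v c)"

definition lp_norm :: "real \<Rightarrow> 'a set \<Rightarrow> ('a \<Rightarrow> real) \<Rightarrow> real" where
  "lp_norm p I x = (\<Sum>\<^sub>\<infinity>c\<in>I. \<bar>x c\<bar> powr p) powr (1 / p)"

end

theory Submission
  imports Defs
begin

definition ind :: "(nat \<Rightarrow> 'a) \<Rightarrow> 'a \<Rightarrow> nat \<Rightarrow> real" where
  "ind v c k = (if 1 \<le> k \<and> v k = c then 1 else 0)"

lemma ind_ge0: "0 \<le> ind v c k" and ind_le1: "ind v c k \<le> 1"
  by (auto simp: ind_def)

lemma coordN_ind: "coordN v c = (\<Sum>k. ind v c k * (1/2)^k)"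
  unfolding coordN_def ind_def by (rule arg_cong[where f=suminf]) auto

lemma summable_bnd:
  fixes t :: "nat \<Rightarrow> real"
  assumes "\<And>k. \<bar>t k\<bar> \<le> B"
  shows "summable (\<lambda>k. t k * (1/2)^k)"
proof (rule summable_comparison_test'[where g="\<lambda>k. B * (1/2)^k" and N=0])
  show "summable (\<lambda>k. B * (1/2::real)^k)"
    by (intro summable_mult summable_geometric) simp
  fix n show "norm (t n * (1/2)^n) \<le> B * (1/2)^n"
    using assms[of n] by (simp add: abs_mult)
qed

lemma summable_ind: "summable (\<lambda>k. ind v c k * (1/2)^k)"
  by (rule summable_bnd[where B=1]) (auto simp: ind_def)

lemma coord_diff:
  "coordN v c - coordN w c = (\<Sum>k. (ind v c k - ind w c k) * (1/2)^k)"
  unfolding coordN_ind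
  by (simp add: suminf_diff[OF summable_ind summable_ind] left_diff_distrib)

lemma tail_sums: "(\<lambda>k. if M < k then (1/2::real)^k else 0) sums ((1/2)^M)"
proof -
  have "(\<lambda>i. (1/2::real)^(Suc M) * (1/2)^i) sums ((1/2)^(Suc M) * (1 / (1 - 1/2)))"
    by (intro sums_mult geometric_sums) simp
  hence "(\<lambda>i. (if M < i + Suc M then (1/2::real)^(i + Suc M) else 0)) sums ((1/2)^M)"
    by (simp add: power_add mult.commute)
  moreover have "(\<Sum>i<Suc M. (if M < i then (1/2::real)^i else 0)) = 0" by simp
  ultimately show ?thesis
    using sums_iff_shift[where n="Suc M" and f="\<lambda>k. if M < k then (1/2::real)^k else 0" and s="(1/2)^M"]
    by simp
qed

lemma lin_aux: "(F::real) \<le> Y \<Longrightarrow> F = a + X \<Longrightarrow> D \<le> X \<Longrightarrow> D = 2 \<Longrightarrow> g \<le> a \<Longrightarrow> Y = S + 2 \<Longrightarrow> g \<le> S"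
  by linarith

lemma L1:
  fixes t :: "nat \<Rightarrow> real"
  assumes b: "\<And>k. \<bar>t k\<bar> \<le> 1" and lt: "\<And>k. k < K \<Longrightarrow> 0 \<le> t k" and tK: "t K = 1"
    and j: "K < j" and tj: "0 \<le> t j"
  shows "(1/2)^j \<le> (\<Sum>k. t k * (1/2)^k)"
proof -
  have s1: "summable (\<lambda>k. (t k + 1) * (1/2::real)^k)"
  proof (rule summable_bnd[where B=2])
    fix k show "\<bar>t k + 1\<bar> \<le> 2" using b[of k] by (auto simp: abs_le_iff)
  qed
  have geo: "(\<Sum>k. (1/2::real)^k) = 2" using suminf_geometric[of "1/2::real"] by simp
  have eq: "(\<Sum>k. (t k + 1) * (1/2::real)^k) = (\<Sum>k. t k * (1/2)^k) + 2"
    using suminf_add[OF summable_bnd[OF b] summable_geometric[of "1/2::real"]] geo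
    by (simp add: algebra_simps)
  have nn: "\<And>n. 0 \<le> (t n + 1) * (1/2::real)^n"
  proof -
    fix n have "-1 \<le> t n" using b[of n] by auto
    thus "0 \<le> (t n + 1) * (1/2::real)^n" by (intro mult_nonneg_nonneg) simp_all
  qed
  define S where "S = (\<Sum>k. t k * (1/2::real)^k)"
  define X where "X = (\<Sum>k\<le>K. (t k + 1) * (1/2::real)^k)"
  define Y where "Y = (\<Sum>k. (t k + 1) * (1/2::real)^k)"
  let ?F = "insert j {..K}"
  have A: "(\<Sum>k\<in>?F. (t k + 1) * (1/2::real)^k) \<le> Y"
    unfolding Y_def by (rule sum_le_suminf[OF s1]) (use nn in auto)
  have B: "(\<Sum>k\<in>?F. (t k + 1) * (1/2::real)^k) = (t j + 1) * (1/2)^j + X"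
    using j unfolding X_def by simp
  have C: "X \<ge> (\<Sum>k\<le>K. (if k = K then 2 * (1/2::real)^k else (1/2)^k))"
    unfolding X_def by (intro sum_mono) (use lt tK in \<open>auto\<close>)
  have D: "(\<Sum>k\<le>K. (if k = K then 2 * (1/2::real)^k else (1/2)^k)) = 2"
  proof -
    have "(\<Sum>k\<le>K. (if k = K then 2 * (1/2::real)^k else (1/2)^k)) = (\<Sum>k<K. (1/2::real)^k) + 2 * (1/2)^K"
      by (simp add: lessThan_Suc_atMost[symmetric])
    also have "(\<Sum>k<K. (1/2::real)^k) = 2 - 2 * (1/2)^K"
      by (subst sum_gp_strict) (simp_all add: field_simps)
    finally show ?thesis by simp
  qed
  have E0: "1 \<le> t j + 1" using tj by linarith
  have E1: "1 * (1/2::real)^j \<le> (t j + 1) * (1/2)^j" by (rule mult_right_mono[OF E0]) (rule zero_le_power, simp)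
  have E: "(1/2::real)^j \<le> (t j + 1) * (1/2)^j" using E1 by (simp only: mult_1)
  have eq': "Y = S + 2" using eq unfolding Y_def S_def .
  from lin_aux[OF A B C D E eq'] have "(1/2::real)^j \<le> S" .
  thus ?thesis unfolding S_def .
qed

lemma coord_nonneg: "0 \<le> coordN v c"
  unfolding coordN_ind by (intro suminf_nonneg summable_ind) (simp add: ind_ge0)

lemma coord_le1: "coordN v c \<le> 1"
proof -
  have "coordN v c \<le> (\<Sum>k. if 0 < k then (1/2::real)^k else 0)"
    unfolding coordN_ind
    by (rule suminf_le[OF _ summable_ind sums_summable[OF tail_sums[of 0]]]) (auto simp: ind_def)
  also have "\<dots> = 1" using sums_unique[OF tail_sums[of 0]] by simp
  finally show ?thesis .
qed

lemma absdiff_le1: "\<bar>coordN v c - coordN w c\<bar> \<le> 1"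
  using coord_nonneg[of v c] coord_le1[of v c] coord_nonneg[of w c] coord_le1[of w c] by linarith

lemma ind_sum_le1: "(\<Sum>c\<in>F. ind v c k) \<le> 1"
proof -
  have "(\<Sum>c\<in>F. ind v c k) = (\<Sum>c\<in>F. if c = v k then (if 1 \<le> k then 1 else 0) else 0)"
    by (intro sum.cong) (auto simp: ind_def)
  also have "\<dots> \<le> 1" by (cases "finite F") (auto simp: sum.delta)
  finally show ?thesis .
qed

lemma agree_sum_bound:
  assumes F: "finite F" and ag: "\<And>k. 1 \<le> k \<Longrightarrow> k \<le> M \<Longrightarrow> v k = w k"
  shows "(\<Sum>c\<in>F. \<bar>coordN v c - coordN w c\<bar>) \<le> 2 * (1/2)^M"
proof -
  let ?t = "\<lambda>c k. \<bar>ind v c k - ind w c k\<bar> * (1/2::real)^k"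
  have sm: "summable (?t c)" for c
    by (rule summable_bnd[where B=1]) (auto simp: ind_def)
  have "\<bar>coordN v c - coordN w c\<bar> \<le> (\<Sum>k. ?t c k)" for c
  proof -
    have "summable (\<lambda>k. \<bar>(ind v c k - ind w c k) * (1/2::real)^k\<bar>)"
      using sm[of c] by (simp add: abs_mult)
    from summable_rabs[OF this] show ?thesis unfolding coord_diff by (simp add: abs_mult)
  qed
  hence "(\<Sum>c\<in>F. \<bar>coordN v c - coordN w c\<bar>) \<le> (\<Sum>c\<in>F. \<Sum>k. ?t c k)"
    by (intro sum_mono)
  also have "\<dots> = (\<Sum>k. \<Sum>c\<in>F. ?t c k)"
    by (rule suminf_sum[symmetric]) (rule sm)
  also have "\<dots> \<le> (\<Sum>k. 2 * (if M < k then (1/2::real)^k else 0))"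
  proof (rule suminf_le)
    show "summable (\<lambda>k. \<Sum>c\<in>F. ?t c k)" by (intro summable_sum sm)
    show "summable (\<lambda>k. 2 * (if M < k then (1/2::real)^k else 0))"
      by (intro summable_mult sums_summable[OF tail_sums])
    fix k
    show "(\<Sum>c\<in>F. ?t c k) \<le> 2 * (if M < k then (1/2::real)^k else 0)"
    proof (cases "M < k")
      case True
      have "(\<Sum>c\<in>F. ?t c k) \<le> (\<Sum>c\<in>F. (ind v c k + ind w c k) * (1/2::real)^k)"
        by (intro sum_mono mult_right_mono) (auto simp: ind_def)
      also have "\<dots> = ((\<Sum>c\<in>F. ind v c k) + (\<Sum>c\<in>F. ind w c k)) * (1/2::real)^k"
        by (simp only: sum.distrib[symmetric] sum_distrib_right)
      also have "\<dots> \<le> 2 * (1/2::real)^k"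
        using ind_sum_le1[where F=F and v=v and k=k] ind_sum_le1[where F=F and v=w and k=k] by (intro mult_right_mono) auto
      finally show ?thesis using True by simp
    next
      case False
      have "?t c k = 0" for c using False ag[of k] by (auto simp: ind_def)
      thus ?thesis using False by simp
    qed
  qed
  also have "\<dots> = 2 * (1/2)^M"
    using sums_unique[OF sums_mult[OF tail_sums[of M], of 2]] by simp
  finally show ?thesis .
qed

lemma lp_term_le: "1 \<le> p \<Longrightarrow> \<bar>coordN v c - coordN w c\<bar> powr p \<le> \<bar>coordN v c - coordN w c\<bar>"
  using powr_mono'[of 1 p "\<bar>coordN v c - coordN w c\<bar>"] absdiff_le1[of v c w] by simp

lemma lp_finite_bound:
  assumes p: "1 \<le> p" and F: "finite F" and ag: "\<And>k. 1 \<le> k \<Longrightarrow> k \<le> M \<Longrightarrow> v k = w k"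
  shows "(\<Sum>c\<in>F. \<bar>coordN v c - coordN w c\<bar> powr p) \<le> 2 * (1/2)^M"
  using sum_mono[of F "\<lambda>c. \<bar>coordN v c - coordN w c\<bar> powr p" "\<lambda>c. \<bar>coordN v c - coordN w c\<bar>"]
    lp_term_le[OF p] agree_sum_bound[OF F ag] by (meson order_trans)

lemma lp_summable:
  assumes p: "1 \<le> p"
  shows "(\<lambda>c. \<bar>coordN v c - coordN w c\<bar> powr p) summable_on I"
proof (rule nonneg_bdd_above_summable_on)
  show "bdd_above (sum (\<lambda>c. \<bar>coordN v c - coordN w c\<bar> powr p) ` {F. F \<subseteq> I \<and> finite F})"
    using lp_finite_bound[OF p, of _ 0 v w] by (intro bdd_aboveI[where M=2]) auto
qed simp

lemma lp_upper:
  assumes p: "1 \<le> p" and ag: "\<And>k. 1 \<le> k \<Longrightarrow> k \<le> M \<Longrightarrow> v k = w k"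
  shows "lp_norm p I (\<lambda>c. pmap v c - pmap w c) \<le> (2 * (1/2)^M) powr (1/p)"
proof -
  have "(\<Sum>\<^sub>\<infinity>c\<in>I. \<bar>coordN v c - coordN w c\<bar> powr p) \<le> 2 * (1/2)^M"
    by (rule infsum_le_finite_sums[OF lp_summable[OF p]]) (rule lp_finite_bound[OF p _ ag])
  moreover have "0 \<le> (\<Sum>\<^sub>\<infinity>c\<in>I. \<bar>coordN v c - coordN w c\<bar> powr p)"
    by (rule infsum_nonneg) simp
  ultimately show ?thesis unfolding lp_norm_def pmap_def
    using p by (intro powr_mono2) auto
qed

lemma lp_lower:
  assumes p: "1 \<le> p" and c: "c \<in> I"
  shows "\<bar>coordN v c - coordN w c\<bar> \<le> lp_norm p I (\<lambda>c. pmap v c - pmap w c)"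
proof -
  let ?d = "\<bar>coordN v c - coordN w c\<bar>"
  have "(\<Sum>\<^sub>\<infinity>x\<in>{c}. \<bar>coordN v x - coordN w x\<bar> powr p) \<le> (\<Sum>\<^sub>\<infinity>x\<in>I. \<bar>coordN v x - coordN w x\<bar> powr p)"
    by (rule infsum_mono_neutral[OF _ lp_summable[OF p]]) (use c in auto)
  hence le: "?d powr p \<le> (\<Sum>\<^sub>\<infinity>x\<in>I. \<bar>coordN v x - coordN w x\<bar> powr p)" by simp
  have "?d = (?d powr p) powr (1/p)" using p by (simp add: powr_powr)
  also have "\<dots> \<le> (\<Sum>\<^sub>\<infinity>x\<in>I. \<bar>coordN v x - coordN w x\<bar> powr p) powr (1/p)"
    using le p by (intro powr_mono2) auto
  finally show ?thesis unfolding lp_norm_def pmap_def .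
qed

lemma LB:
  assumes "\<And>k. k < K \<Longrightarrow> 0 \<le> ind v c k - ind w c k" "ind v c K - ind w c K = 1" "K < j"
    "0 \<le> ind v c j - ind w c j"
  shows "(1/2)^j \<le> \<bar>coordN v c - coordN w c\<bar>"
proof -
  have "(1/2)^j \<le> (\<Sum>k. (ind v c k - ind w c k) * (1/2)^k)"
    by (rule L1[OF _ assms]) (auto simp: ind_def)
  thus ?thesis unfolding coord_diff by linarith
qed

lemma LB':
  assumes "\<And>k. k < K \<Longrightarrow> 0 \<le> ind w c k - ind v c k" "ind w c K - ind v c K = 1" "K < j"
    "0 \<le> ind w c j - ind v c j"
  shows "(1/2)^j \<le> \<bar>coordN v c - coordN w c\<bar>"
  using LB[OF assms] by (simp add: abs_minus_commute)

lemma half_pow_mono: "i \<le> j \<Longrightarrow> (1/2::real)^j \<le> (1/2)^i"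
  by (rule power_decreasing) auto

lemma pick: "(1/2::real)^j \<le> \<bar>coordN v c - coordN w c\<bar> \<Longrightarrow> (1/2)^J \<le> (1/2::real)^j \<Longrightarrow> c \<in> A \<Longrightarrow> c \<noteq> z \<Longrightarrow> \<exists>c\<in>A-{z}. (1/2)^J \<le> \<bar>coordN v c - coordN w c\<bar>"
  by (meson order_trans DiffI singletonD)

lemma pick0: "(1/2::real)^J \<le> \<bar>coordN v c - coordN w c\<bar> \<Longrightarrow> c \<in> A \<Longrightarrow> c \<noteq> z \<Longrightarrow> \<exists>c\<in>A-{z}. (1/2)^J \<le> \<bar>coordN v c - coordN w c\<bar>"
  by blast

lemma first_diff:
  fixes v w :: "nat \<Rightarrow> 'a"
  assumes "\<not> (\<forall>k. 1 \<le> k \<and> k \<le> M \<longrightarrow> v k = w k)"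
  shows "\<exists>K. 1 \<le> K \<and> K \<le> M \<and> (\<forall>k. 1 \<le> k \<and> k < K \<longrightarrow> v k = w k) \<and> v K \<noteq> w K"
proof -
  from assms have "\<exists>k. 1 \<le> k \<and> k \<le> M \<and> v k \<noteq> w k" by auto
  then obtain K where K: "1 \<le> K \<and> K \<le> M \<and> v K \<noteq> w K"
    and min: "\<And>k. k < K \<Longrightarrow> \<not> (1 \<le> k \<and> k \<le> M \<and> v k \<noteq> w k)"
    using exists_least_iff[where P="\<lambda>k. 1 \<le> k \<and> k \<le> M \<and> v k \<noteq> w k"] by blast
  show ?thesis using K min by (intro exI[of _ K]) auto
qed

lemma FD:
  assumes K1: "1 \<le> K" and ag: "\<And>k. 1 \<le> k \<Longrightarrow> k < K \<Longrightarrow> v k = w k" and dK: "v K \<noteq> w K"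
    and ja: "K < ja" and jb: "K < jb" and wj: "w ja \<noteq> w jb" and J1: "ja \<le> J" and J2: "jb \<le> J"
    and vA: "inN A v" and wA: "inN A w"
  shows "\<exists>c\<in>A-{z}. (1/2)^(J+1) \<le> \<bar>coordN v c - coordN w c\<bar>"
proof -
  have agk: "ind v c k = ind w c k" if "k < K" for c k
    using ag[of k] that by (auto simp: ind_def)
  have vKA: "v K \<in> A" using vA K1 by (auto simp: inN_def)
  have wKA: "w K \<in> A" using wA K1 by (auto simp: inN_def)
  have wjA: "w j \<in> A" if "K < j" for j using wA K1 that by (auto simp: inN_def)
  show ?thesis
  proof (cases "v K = z")
    case False
    obtain j where j: "j \<in> {ja, jb}" "w j \<noteq> v K" using wj by (metis insertCI)
    have jK: "K < j" "j \<le> J" using j ja jb J1 J2 by auto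
    have "(1/2)^j \<le> \<bar>coordN v (v K) - coordN w (v K)\<bar>"
      by (rule LB[where K=K]) (use agk jK j dK K1 in \<open>auto simp: ind_def\<close>)
    moreover have "(1/2::real)^(J+1) \<le> (1/2)^j" using jK by (intro half_pow_mono) auto
    ultimately show ?thesis using False vKA by (metis pick)
  next
    case vz: True
    hence c0z: "w K \<noteq> z" using dK by auto
    show ?thesis
    proof (cases "\<exists>j\<in>{ja,jb}. w j = w K")
      case True
      then obtain j where j: "j \<in> {ja, jb}" "w j = w K" by auto
      have jK: "K < j" "j \<le> J" using j ja jb J1 J2 by auto
      have "(1/2)^j \<le> \<bar>coordN v (w K) - coordN w (w K)\<bar>"
        by (rule LB'[where K=K]) (use agk jK j dK K1 in \<open>auto simp: ind_def\<close>)
      moreover have "(1/2::real)^(J+1) \<le> (1/2)^j" using jK by (intro half_pow_mono) auto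
      ultimately show ?thesis using c0z wKA by (metis pick)
    next
      case False
      obtain j where j: "j \<in> {ja, jb}" "w j \<noteq> z" using wj by (metis insertCI)
      have jK: "K < j" "j \<le> J" using j ja jb J1 J2 by auto
      have dc: "w j \<noteq> w K" using False j by auto
      show ?thesis
      proof (cases "\<exists>k0. K < k0 \<and> k0 \<le> j + 1 \<and> v k0 \<noteq> w K")
        case True
        then obtain k0 where k0: "K < k0" "k0 \<le> j + 1" "v k0 \<noteq> w K" by auto
        have "(1/2)^k0 \<le> \<bar>coordN v (w K) - coordN w (w K)\<bar>"
          by (rule LB'[where K=K]) (use agk k0 dK vz c0z K1 in \<open>auto simp: ind_def\<close>)
        moreover have "(1/2::real)^(J+1) \<le> (1/2)^k0" using jK k0 by (intro half_pow_mono) auto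
        ultimately show ?thesis using c0z wKA by (metis pick)
      next
        case False
        hence vc: "\<And>k. K < k \<Longrightarrow> k \<le> j + 1 \<Longrightarrow> v k = w K" by auto
        have "(1/2)^(j+1) \<le> \<bar>coordN v (w j) - coordN w (w j)\<bar>"
        proof (rule LB'[where K=j])
          fix k assume k: "k < j"
          show "0 \<le> ind w (w j) k - ind v (w j) k"
          proof (cases "k < K")
            case True thus ?thesis using agk[of k "w j"] by simp
          next
            case False
            hence "v k \<noteq> w j" using vc[of k] k jK vz j dc by (cases "k = K") auto
            thus ?thesis by (auto simp: ind_def)
          qed
        next
          show "ind w (w j) j - ind v (w j) j = 1" using vc[of j] jK dc K1 by (auto simp: ind_def)
        next
          show "j < j + 1" by simp
        next
          show "0 \<le> ind w (w j) (j + 1) - ind v (w j) (j + 1)" using vc[of "j+1"] jK dc by (auto simp: ind_def)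
        qed
        moreover have "(1/2::real)^(J+1) \<le> (1/2)^(j+1)" using jK by (intro half_pow_mono) auto
        ultimately show ?thesis using j jK wjA by (metis pick)
      qed
    qed
  qed
qed

lemma TC:
  assumes K1: "1 \<le> K" and ag: "\<And>k. 1 \<le> k \<Longrightarrow> k < K \<Longrightarrow> v k = w k" and dK: "v K \<noteq> b"
    and wb: "\<And>k. K \<le> k \<Longrightarrow> w k = b" and vA: "inN A v" and bA: "b \<in> A"
  shows "\<exists>c\<in>A-{z}. (1/2)^(K+1) \<le> \<bar>coordN v c - coordN w c\<bar>"
proof -
  have agk: "ind v c k = ind w c k" if "k < K" for c k
    using ag[of k] that by (auto simp: ind_def)
  have vKA: "v K \<in> A" using vA K1 by (auto simp: inN_def)
  show ?thesis
  proof (cases "v K = z")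
    case False
    have "(1/2)^(K+1) \<le> \<bar>coordN v (v K) - coordN w (v K)\<bar>"
      by (rule LB[where K=K]) (use agk wb[of K] wb[of "K+1"] dK K1 in \<open>auto simp: ind_def\<close>)
    thus ?thesis using False vKA by (metis pick0)
  next
    case True
    have "(1/2)^(K+1) \<le> \<bar>coordN v b - coordN w b\<bar>"
      by (rule LB'[where K=K]) (use agk wb[of K] wb[of "K+1"] dK K1 in \<open>auto simp: ind_def\<close>)
    thus ?thesis using True dK bA by (metis pick0)
  qed
qed

lemma SN:
  assumes K1: "1 \<le> nn" and ag: "\<And>k. 1 \<le> k \<Longrightarrow> k < nn \<Longrightarrow> v k = w k" and wa: "w nn = a"
    and wb: "\<And>k. nn < k \<Longrightarrow> w k = b" and va: "v nn \<noteq> a" and vb: "v nn \<noteq> b"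
    and vA: "inN A v" and aA: "a \<in> A" and bA: "b \<in> A" and ab: "a \<noteq> b"
  shows "\<exists>c\<in>A-{z}. (1/2)^(nn+2) \<le> \<bar>coordN v c - coordN w c\<bar>"
proof -
  have agk: "ind v c k = ind w c k" if "k < nn" for c k
    using ag[of k] that by (auto simp: ind_def)
  have vKA: "v nn \<in> A" using vA K1 by (auto simp: inN_def)
  show ?thesis
  proof (cases "v nn = z")
    case False
    have "(1/2)^(nn+1) \<le> \<bar>coordN v (v nn) - coordN w (v nn)\<bar>"
      by (rule LB[where K=nn]) (use agk wa wb[of "nn+1"] va vb K1 in \<open>auto simp: ind_def\<close>)
    moreover have "(1/2::real)^(nn+2) \<le> (1/2)^(nn+1)" by (intro half_pow_mono) auto
    ultimately show ?thesis using False vKA by (metis pick)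
  next
    case vz: True
    have az: "a \<noteq> z" and bz: "b \<noteq> z" using va vb vz by auto
    show ?thesis
    proof (cases "v (nn+1) = a")
      case True
      have "(1/2)^(nn+2) \<le> \<bar>coordN v b - coordN w b\<bar>"
      proof (rule LB'[where K="nn+1"])
        fix k assume "k < nn + 1"
        thus "0 \<le> ind w b k - ind v b k" using agk[of k b] wa vz bz ab by (cases "k = nn") (auto simp: ind_def)
      qed (use True ab wb[of "nn+1"] wb[of "nn+2"] in \<open>auto simp: ind_def\<close>)
      thus ?thesis using bz bA by (metis pick0)
    next
      case False
      have "(1/2)^(nn+1) \<le> \<bar>coordN v a - coordN w a\<bar>"
        by (rule LB'[where K=nn]) (use agk wa wb[of "nn+1"] False vz az ab K1 in \<open>auto simp: ind_def\<close>)
      moreover have "(1/2::real)^(nn+2) \<le> (1/2)^(nn+1)" by (intro half_pow_mono) auto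
      ultimately show ?thesis using az aA by (metis pick)
    qed
  qed
qed

lemma dN_nonneg: "0 \<le> dN v w"
  by (simp add: dN_def)

lemma dN_agree:
  assumes "\<And>k. 1 \<le> k \<Longrightarrow> k \<le> M \<Longrightarrow> v k = w k"
  shows "dN v w \<le> 1 / real (M+1)"
proof (cases "\<forall>k\<ge>1. v k = w k")
  case True thus ?thesis by (simp add: dN_def)
next
  case False
  then obtain k0 where k0: "1 \<le> k0 \<and> v k0 \<noteq> w k0" by auto
  define L where "L = (LEAST k. 1 \<le> k \<and> v k \<noteq> w k)"
  have L: "1 \<le> L \<and> v L \<noteq> w L" unfolding L_def by (rule LeastI[of _ k0]) (rule k0)
  have "M + 1 \<le> L" using L assms[of L] by (cases "L \<le> M") auto
  hence "1 / real L \<le> 1 / real (M+1)" by (intro divide_left_mono) auto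
  thus ?thesis using False by (simp add: dN_def L_def)
qed

lemma dN_small:
  assumes M: "1 \<le> M" and d: "dN v w < 1 / real M"
  shows "\<forall>k. 1 \<le> k \<and> k \<le> M \<longrightarrow> v k = w k"
proof (rule ccontr)
  assume "\<not> ?thesis"
  then obtain k0 where k0: "1 \<le> k0" "k0 \<le> M" "v k0 \<noteq> w k0" by auto
  hence nall: "\<not> (\<forall>k\<ge>1. v k = w k)" by auto
  define L where "L = (LEAST k. 1 \<le> k \<and> v k \<noteq> w k)"
  have "L \<le> k0" unfolding L_def by (rule Least_le) (use k0 in auto)
  have L1: "1 \<le> L" unfolding L_def by (rule LeastI2[of _ k0]) (use k0 in auto)
  have "1 / real M \<le> 1 / real L" using \<open>L \<le> k0\<close> k0 L1 by (intro divide_left_mono) auto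
  moreover have "dN v w = 1 / real L" by (simp only: dN_def L_def if_not_P[OF nall])
  ultimately show False using d by linarith
qed

lemma dN_tendsto_iff:
  "((\<lambda>n. dN (f n) w) \<longlonglongrightarrow> 0) \<longleftrightarrow>
     (\<forall>M. eventually (\<lambda>n. \<forall>k. 1 \<le> k \<and> k \<le> M \<longrightarrow> f n k = w k) sequentially)"
proof
  assume lim: "(\<lambda>n. dN (f n) w) \<longlonglongrightarrow> 0"
  show "\<forall>M. eventually (\<lambda>n. \<forall>k. 1 \<le> k \<and> k \<le> M \<longrightarrow> f n k = w k) sequentially"
  proof
    fix M
    have "eventually (\<lambda>n. dN (f n) w < 1 / real (M+1)) sequentially"
      by (rule order_tendstoD(2)[OF lim]) simp
    thus "eventually (\<lambda>n. \<forall>k. 1 \<le> k \<and> k \<le> M \<longrightarrow> f n k = w k) sequentially"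
    proof (rule eventually_mono)
      fix n assume "dN (f n) w < 1 / real (M+1)"
      from dN_small[OF _ this] show "\<forall>k. 1 \<le> k \<and> k \<le> M \<longrightarrow> f n k = w k" by auto
    qed
  qed
next
  assume ev: "\<forall>M. eventually (\<lambda>n. \<forall>k. 1 \<le> k \<and> k \<le> M \<longrightarrow> f n k = w k) sequentially"
  show "(\<lambda>n. dN (f n) w) \<longlonglongrightarrow> 0"
  proof (rule order_tendstoI)
    fix a :: real assume a0: "a < 0"
    show "eventually (\<lambda>n. a < dN (f n) w) sequentially"
    proof (intro always_eventually allI)
      fix n show "a < dN (f n) w" using a0 dN_nonneg[of "f n" w] by linarith
    qed
  next
    fix a :: real assume a: "0 < a"
    obtain M where M: "M > 0" "inverse (real M) < a" using ex_inverse_of_nat_less[OF a] by auto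
    show "eventually (\<lambda>n. dN (f n) w < a) sequentially"
      using ev[rule_format, of M]
    proof (rule eventually_mono)
      fix n assume "\<forall>k. 1 \<le> k \<and> k \<le> M \<longrightarrow> f n k = w k"
      hence "dN (f n) w \<le> 1 / real (M+1)" by (intro dN_agree) auto
      also have "\<dots> \<le> 1 / real M" using M by (intro divide_left_mono) auto
      also have "\<dots> < a" using M by (simp add: divide_inverse)
      finally show "dN (f n) w < a" .
    qed
  qed
qed

lemma lp_norm_nonneg: "0 \<le> lp_norm p I x"
  by (simp add: lp_norm_def)

lemma norm_to_coord:
  assumes p: "1 \<le> p"
    and lim: "(\<lambda>n. lp_norm p I (\<lambda>c. pmap (f n) c - pmap w c)) \<longlonglongrightarrow> 0" and d: "0 < \<delta>"
  shows "eventually (\<lambda>n. \<forall>c\<in>I. \<bar>coordN (f n) c - coordN w c\<bar> < \<delta>) sequentially"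
  using order_tendstoD(2)[OF lim d]
proof (rule eventually_mono)
  fix n assume "lp_norm p I (\<lambda>c. pmap (f n) c - pmap w c) < \<delta>"
  thus "\<forall>c\<in>I. \<bar>coordN (f n) c - coordN w c\<bar> < \<delta>"
    using lp_lower[OF p, of _ I "f n" w] by (meson le_less_trans)
qed

lemma coord_to_norm:
  assumes p: "1 \<le> p"
    and ev: "\<And>M. eventually (\<lambda>n. \<exists>w'\<in>W. \<forall>k. 1 \<le> k \<and> k \<le> M \<longrightarrow> f n k = w' k) sequentially"
    and W: "\<And>w'. w' \<in> W \<Longrightarrow> pmap w' = pmap w"
  shows "(\<lambda>n. lp_norm p I (\<lambda>c. pmap (f n) c - pmap w c)) \<longlonglongrightarrow> 0"
proof (rule order_tendstoI)
  fix a :: real assume a0: "a < 0"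
  show "eventually (\<lambda>n. a < lp_norm p I (\<lambda>c. pmap (f n) c - pmap w c)) sequentially"
  proof (intro always_eventually allI)
    fix n show "a < lp_norm p I (\<lambda>c. pmap (f n) c - pmap w c)"
      using a0 lp_norm_nonneg[of p I "\<lambda>c. pmap (f n) c - pmap w c"] by linarith
  qed
next
  fix a :: real assume a: "0 < a"
  have ap: "0 < a powr p / 2" using a by simp
  obtain M where M: "(1/2::real)^M < a powr p / 2" using real_arch_pow_inv[OF ap, of "1/2"] by auto
  have bnd: "(2 * (1/2)^M) powr (1/p) < a"
  proof -
    have "(2 * (1/2::real)^M) powr (1/p) < (a powr p) powr (1/p)"
      using M p by (intro powr_less_mono2) auto
    also have "\<dots> = a" using a p by (simp add: powr_powr)
    finally show ?thesis .
  qed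
  show "eventually (\<lambda>n. lp_norm p I (\<lambda>c. pmap (f n) c - pmap w c) < a) sequentially"
    using ev[of M]
  proof (rule eventually_mono)
    fix n assume "\<exists>w'\<in>W. \<forall>k. 1 \<le> k \<and> k \<le> M \<longrightarrow> f n k = w' k"
    then obtain w' where w': "w' \<in> W" "\<forall>k. 1 \<le> k \<and> k \<le> M \<longrightarrow> f n k = w' k" by auto
    have "lp_norm p I (\<lambda>c. pmap (f n) c - pmap w c) = lp_norm p I (\<lambda>c. pmap (f n) c - pmap w' c)"
      using W[OF w'(1)] by simp
    also have "\<dots> \<le> (2 * (1/2)^M) powr (1/p)" by (rule lp_upper[OF p]) (use w'(2) in auto)
    finally show "lp_norm p I (\<lambda>c. pmap (f n) c - pmap w c) < a" using bnd by linarith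
  qed
qed

lemma swap_sum:
  "(\<Sum>k. (if k = n0 then -1 else if n0 < k then 1 else 0) * (1/2::real)^k) = 0"
proof -
  have "(\<lambda>k. (if n0 < k then (1/2::real)^k else 0) - (if k = n0 then (1/2)^k else 0)) sums ((1/2)^n0 - (1/2)^n0)"
    by (intro sums_diff tail_sums sums_single)
  moreover have "(\<lambda>k. (if n0 < k then (1/2::real)^k else 0) - (if k = n0 then (1/2)^k else 0))
     = (\<lambda>k. (if k = n0 then -1 else if n0 < k then 1 else 0) * (1/2::real)^k)"
    by (rule ext) auto
  ultimately show ?thesis by (simp add: sums_iff)
qed

lemma pmap_swap:
  assumes nn: "1 \<le> nn" and ab: "a \<noteq> b" and wa: "w nn = a" and wb: "\<And>k. nn < k \<Longrightarrow> w k = b"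
  defines "w' \<equiv> (\<lambda>k. if k = nn then b else if nn < k then a else w k)"
  shows "pmap w' = pmap w"
proof (rule ext)
  fix c
  let ?g = "\<lambda>k. (if k = nn then -1 else if nn < k then 1 else 0) * (1/2::real)^k"
  have "coordN w' c - coordN w c = 0"
  proof (cases "c = a \<or> c = b")
    case True
    define s where "s = (if c = a then 1 else -1::real)"
    have "(\<lambda>k. (ind w' c k - ind w c k) * (1/2)^k) = (\<lambda>k. s * ?g k)"
      using True ab nn wa wb unfolding s_def w'_def ind_def by (intro ext) auto
    hence "coordN w' c - coordN w c = (\<Sum>k. s * ?g k)" unfolding coord_diff by simp
    also have "\<dots> = s * (\<Sum>k. ?g k)"
      by (rule suminf_mult) (rule summable_bnd[where B=1], auto)
    finally show ?thesis using swap_sum[of nn] by simp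
  next
    case False
    have "(\<lambda>k. (ind w' c k - ind w c k) * (1/2::real)^k) = (\<lambda>k. 0)"
      using False wa wb unfolding w'_def ind_def by (intro ext) auto
    thus ?thesis unfolding coord_diff by simp
  qed
  thus "pmap w' c = pmap w c" unfolding pmap_def by simp
qed

lemma part1:
  fixes A :: "'a set" and z :: 'a and p :: real
    and \<alpha>s :: "nat \<Rightarrow> nat \<Rightarrow> 'a" and \<alpha> :: "nat \<Rightarrow> 'a"
  assumes p: "1 \<le> p"
    and sA: "\<And>n. 1 \<le> n \<Longrightarrow> inN A (\<alpha>s n)"
    and aA: "inN A \<alpha>"
    and NC: "\<forall>q\<ge>1. \<not> (\<forall>k\<ge>q. \<alpha> k = \<alpha> q)"
  shows "((\<lambda>n. lp_norm p (A - {z}) (\<lambda>c. pmap (\<alpha>s n) c - pmap \<alpha> c)) \<longlonglongrightarrow> 0)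
            \<longleftrightarrow> ((\<lambda>n. dN (\<alpha>s n) \<alpha>) \<longlonglongrightarrow> 0)"
proof
  assume lim: "(\<lambda>n. lp_norm p (A - {z}) (\<lambda>c. pmap (\<alpha>s n) c - pmap \<alpha> c)) \<longlonglongrightarrow> 0"
  show "(\<lambda>n. dN (\<alpha>s n) \<alpha>) \<longlonglongrightarrow> 0"
    unfolding dN_tendsto_iff
  proof
    fix M
    obtain k where k: "k \<ge> M + 1" "\<alpha> k \<noteq> \<alpha> (M+1)" using NC[rule_format, of "M+1"] by auto
    have kM: "M + 1 < k" using k by (cases "k = M+1") auto
    have ev: "eventually (\<lambda>n. (\<forall>c\<in>A-{z}. \<bar>coordN (\<alpha>s n) c - coordN \<alpha> c\<bar> < (1/2)^(k+1)) \<and> 1 \<le> n) sequentially"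
      by (intro eventually_conj norm_to_coord[OF p lim]) (auto simp: eventually_sequentially)
    show "eventually (\<lambda>n. \<forall>i. 1 \<le> i \<and> i \<le> M \<longrightarrow> \<alpha>s n i = \<alpha> i) sequentially"
      using ev
    proof (rule eventually_mono)
      fix n assume n: "(\<forall>c\<in>A-{z}. \<bar>coordN (\<alpha>s n) c - coordN \<alpha> c\<bar> < (1/2)^(k+1)) \<and> 1 \<le> n"
      show "\<forall>i. 1 \<le> i \<and> i \<le> M \<longrightarrow> \<alpha>s n i = \<alpha> i"
      proof (rule ccontr)
        assume "\<not> ?thesis"
        from first_diff[OF this] obtain K where K: "1 \<le> K" "K \<le> M" "\<forall>i. 1 \<le> i \<and> i < K \<longrightarrow> \<alpha>s n i = \<alpha> i" "\<alpha>s n K \<noteq> \<alpha> K"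
          by blast
        have "\<exists>c\<in>A-{z}. (1/2)^(k+1) \<le> \<bar>coordN (\<alpha>s n) c - coordN \<alpha> c\<bar>"
          by (rule FD[where K=K and ja="M+1" and jb=k]) (use K k kM n sA aA in auto)
        thus False using n by (meson not_less)
      qed
    qed
  qed
next
  assume "(\<lambda>n. dN (\<alpha>s n) \<alpha>) \<longlonglongrightarrow> 0"
  hence ev: "\<forall>M. eventually (\<lambda>n. \<forall>k. 1 \<le> k \<and> k \<le> M \<longrightarrow> \<alpha>s n k = \<alpha> k) sequentially"
    unfolding dN_tendsto_iff .
  show "(\<lambda>n. lp_norm p (A - {z}) (\<lambda>c. pmap (\<alpha>s n) c - pmap \<alpha> c)) \<longlonglongrightarrow> 0"
    by (rule coord_to_norm[OF p, where W="{\<alpha>}"]) (use ev in auto)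
qed

lemma condA_iff:
  fixes nn m :: nat and v w u :: "nat \<Rightarrow> 'a"
  assumes m: "nn \<le> m" and n1: "1 \<le> nn" and wa: "w nn = a" and wb: "\<And>k. nn < k \<Longrightarrow> w k = b"
    and uw: "\<And>i. i < nn \<Longrightarrow> u i = w i"
  shows "(((\<forall>i. 1 \<le> i \<and> i \<le> nn - 1 \<longrightarrow> v i = u i) \<and> v nn = a \<and> (\<forall>i. nn + 1 \<le> i \<and> i \<le> m \<longrightarrow> v i = b))
     \<longleftrightarrow> (\<forall>k. 1 \<le> k \<and> k \<le> m \<longrightarrow> v k = w k))"
proof
  assume H: "(\<forall>i. 1 \<le> i \<and> i \<le> nn - 1 \<longrightarrow> v i = u i) \<and> v nn = a \<and> (\<forall>i. nn + 1 \<le> i \<and> i \<le> m \<longrightarrow> v i = b)"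
  show "\<forall>k. 1 \<le> k \<and> k \<le> m \<longrightarrow> v k = w k"
  proof (intro allI impI)
    fix k assume k: "1 \<le> k \<and> k \<le> m"
    consider "k < nn" | "k = nn" | "nn < k" using less_linear[of k nn] by blast
    thus "v k = w k"
    proof cases
      case 1
      hence "1 \<le> k \<and> k \<le> nn - 1" using k by auto
      hence "v k = u k" using H by blast
      thus ?thesis using uw[OF 1] by simp
    next
      case 2 thus ?thesis using H wa by simp
    next
      case 3
      hence "nn + 1 \<le> k \<and> k \<le> m" using k by auto
      hence "v k = b" using H by blast
      thus ?thesis using wb[OF 3] by simp
    qed
  qed
next
  assume H: "\<forall>k. 1 \<le> k \<and> k \<le> m \<longrightarrow> v k = w k"
  show "(\<forall>i. 1 \<le> i \<and> i \<le> nn - 1 \<longrightarrow> v i = u i) \<and> v nn = a \<and> (\<forall>i. nn + 1 \<le> i \<and> i \<le> m \<longrightarrow> v i = b)"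
  proof (intro conjI allI impI)
    fix i assume i: "1 \<le> i \<and> i \<le> nn - 1"
    hence i2: "i < nn" "1 \<le> i \<and> i \<le> m" using m n1 by auto
    hence "v i = w i" using H by blast
    thus "v i = u i" using uw[OF i2(1)] by simp
  next
    have "1 \<le> nn \<and> nn \<le> m" using m n1 by simp
    hence "v nn = w nn" using H by blast
    thus "v nn = a" using wa by simp
  next
    fix i assume i: "nn + 1 \<le> i \<and> i \<le> m"
    hence "1 \<le> i \<and> i \<le> m" "nn < i" by auto
    thus "v i = b" using H wb by metis
  qed
qed

lemma part2:
  fixes A :: "'a set" and z :: 'a and p :: real
    and \<alpha>s :: "nat \<Rightarrow> nat \<Rightarrow> 'a" and \<alpha> :: "nat \<Rightarrow> 'a"
  assumes p: "1 \<le> p"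
    and sA: "\<And>n. 1 \<le> n \<Longrightarrow> inN A (\<alpha>s n)"
    and aA: "inN A \<alpha>"
    and n0: "2 \<le> n0" and aIn: "a \<in> A" and bIn: "b \<in> A" and ab: "a \<noteq> b" and \<alpha>a: "\<alpha> n0 = a"
    and \<alpha>b: "\<forall>k>n0. \<alpha> k = b"
  shows "((\<lambda>n. lp_norm p (A - {z}) (\<lambda>c. pmap (\<alpha>s n) c - pmap \<alpha> c)) \<longlonglongrightarrow> 0)
            \<longleftrightarrow> (\<forall>m. m > n0 + 1 \<longrightarrow> (\<exists>lm\<ge>1. \<forall>l\<ge>lm.
                  ((\<forall>i. 1 \<le> i \<and> i \<le> n0 - 1 \<longrightarrow> \<alpha>s l i = \<alpha> i) \<and> \<alpha>s l n0 = a
                     \<and> (\<forall>i. n0 + 1 \<le> i \<and> i \<le> m \<longrightarrow> \<alpha>s l i = b))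
                \<or> ((\<forall>i. 1 \<le> i \<and> i \<le> n0 - 1 \<longrightarrow> \<alpha>s l i = \<alpha> i) \<and> \<alpha>s l n0 = b
                     \<and> (\<forall>i. n0 + 1 \<le> i \<and> i \<le> m \<longrightarrow> \<alpha>s l i = a))))"
    (is "?L \<longleftrightarrow> ?R")
proof -
  define \<alpha>' where "\<alpha>' = (\<lambda>k. if k = n0 then b else if n0 < k then a else \<alpha> k)"
  have n01: "1 \<le> n0" using n0 by simp
  have pm: "pmap \<alpha>' = pmap \<alpha>" unfolding \<alpha>'_def
    by (rule pmap_swap[where w=\<alpha> and a=a and b=b and nn=n0, OF n01 ab \<alpha>a]) (use \<alpha>b in auto)
  have cm: "coordN \<alpha>' c = coordN \<alpha> c" for c using fun_cong[OF pm, of c] by (simp add: pmap_def)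
  have a'n0: "\<alpha>' n0 = b" and a'a: "\<And>k. n0 < k \<Longrightarrow> \<alpha>' k = a" and a'lt: "\<And>i. i < n0 \<Longrightarrow> \<alpha> i = \<alpha>' i"
    unfolding \<alpha>'_def by auto
  have condA: "\<And>m l. n0 \<le> m \<Longrightarrow> (((\<forall>i. 1 \<le> i \<and> i \<le> n0 - 1 \<longrightarrow> \<alpha>s l i = \<alpha> i) \<and> \<alpha>s l n0 = a
                     \<and> (\<forall>i. n0 + 1 \<le> i \<and> i \<le> m \<longrightarrow> \<alpha>s l i = b)) \<longleftrightarrow> (\<forall>k. 1 \<le> k \<and> k \<le> m \<longrightarrow> \<alpha>s l k = \<alpha> k))"
    by (rule condA_iff[where nn=n0 and w=\<alpha> and u=\<alpha> and a=a and b=b]) (use \<alpha>b \<alpha>a n01 in auto)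
  have condB: "\<And>m l. n0 \<le> m \<Longrightarrow> (((\<forall>i. 1 \<le> i \<and> i \<le> n0 - 1 \<longrightarrow> \<alpha>s l i = \<alpha> i) \<and> \<alpha>s l n0 = b
                     \<and> (\<forall>i. n0 + 1 \<le> i \<and> i \<le> m \<longrightarrow> \<alpha>s l i = a)) \<longleftrightarrow> (\<forall>k. 1 \<le> k \<and> k \<le> m \<longrightarrow> \<alpha>s l k = \<alpha>' k))"
    by (rule condA_iff[where nn=n0 and w=\<alpha>' and u=\<alpha> and a=b and b=a]) (use a'n0 a'a a'lt n01 in auto)
  show ?thesis
  proof
    assume lim: ?L
    show ?R
    proof (intro allI impI)
      fix m assume m: "n0 + 1 < m"
      have ev: "eventually (\<lambda>n. (\<forall>c\<in>A-{z}. \<bar>coordN (\<alpha>s n) c - coordN \<alpha> c\<bar> < (1/2)^(m+2)) \<and> 1 \<le> n) sequentially"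
        by (intro eventually_conj norm_to_coord[OF p lim]) (auto simp: eventually_sequentially)
      have "eventually (\<lambda>n. (\<forall>k. 1 \<le> k \<and> k \<le> m \<longrightarrow> \<alpha>s n k = \<alpha> k) \<or> (\<forall>k. 1 \<le> k \<and> k \<le> m \<longrightarrow> \<alpha>s n k = \<alpha>' k)) sequentially"
        using ev
      proof (rule eventually_mono)
        fix n assume n: "(\<forall>c\<in>A-{z}. \<bar>coordN (\<alpha>s n) c - coordN \<alpha> c\<bar> < (1/2)^(m+2)) \<and> 1 \<le> n"
        have vA: "inN A (\<alpha>s n)" using sA n by auto
        have noc: False if "c \<in> A - {z}" "(1/2)^j \<le> \<bar>coordN (\<alpha>s n) c - coordN \<alpha> c\<bar>" "j \<le> m + 2" for c j
        proof -
          have "(1/2::real)^(m+2) \<le> (1/2)^j" using that(3) by (rule half_pow_mono)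
          thus False using that n by (meson not_less order_trans)
        qed
        have noc2: False if "\<exists>c\<in>A - {z}. (1/2)^j \<le> \<bar>coordN (\<alpha>s n) c - coordN \<alpha> c\<bar>" "j \<le> m + 2" for j
          using that noc by blast
        have agr1: "\<forall>k. 1 \<le> k \<and> k \<le> n0 - 1 \<longrightarrow> \<alpha>s n k = \<alpha> k"
        proof (rule ccontr)
          assume "\<not> ?thesis"
          from first_diff[OF this] obtain K where K: "1 \<le> K" "K \<le> n0 - 1" "\<forall>i. 1 \<le> i \<and> i < K \<longrightarrow> \<alpha>s n i = \<alpha> i" "\<alpha>s n K \<noteq> \<alpha> K"
            by blast
          have "\<exists>c\<in>A-{z}. (1/2)^(n0+1+1) \<le> \<bar>coordN (\<alpha>s n) c - coordN \<alpha> c\<bar>"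
            by (rule FD[where K=K and ja=n0 and jb="n0+1"]) (use K n0 \<alpha>a \<alpha>b ab vA aA in auto)
          thus False by (rule noc2) (use m in simp)
        qed
        have vab: "\<alpha>s n n0 = a \<or> \<alpha>s n n0 = b"
        proof (rule ccontr)
          assume "\<not> ?thesis"
          hence "\<exists>c\<in>A-{z}. (1/2)^(n0+2) \<le> \<bar>coordN (\<alpha>s n) c - coordN \<alpha> c\<bar>"
            by (intro SN[where nn=n0 and v="\<alpha>s n" and w=\<alpha> and a=a and b=b and A=A and z=z]) (use agr1 \<alpha>b n01 \<alpha>a vA aIn bIn ab in auto)
          thus False by (rule noc2) (use m in simp)
        qed
        show "(\<forall>k. 1 \<le> k \<and> k \<le> m \<longrightarrow> \<alpha>s n k = \<alpha> k) \<or> (\<forall>k. 1 \<le> k \<and> k \<le> m \<longrightarrow> \<alpha>s n k = \<alpha>' k)"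
        proof (cases "\<alpha>s n n0 = a")
          case True
          have "\<forall>k. 1 \<le> k \<and> k \<le> m \<longrightarrow> \<alpha>s n k = \<alpha> k"
          proof (rule ccontr)
            assume "\<not> ?thesis"
            from first_diff[OF this] obtain K where K: "1 \<le> K" "K \<le> m" "\<forall>i. 1 \<le> i \<and> i < K \<longrightarrow> \<alpha>s n i = \<alpha> i" "\<alpha>s n K \<noteq> \<alpha> K"
              by blast
            have Kn: "n0 < K" using K agr1 True \<alpha>a n01 by (metis le_diff_conv2 less_Suc_eq_le not_less_eq add.commute linorder_neqE_nat Suc_eq_plus1)
            have "\<exists>c\<in>A-{z}. (1/2)^(K+1) \<le> \<bar>coordN (\<alpha>s n) c - coordN \<alpha> c\<bar>"
              by (rule TC[where b=b]) (use K Kn \<alpha>b vA bIn in auto)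
            thus False by (rule noc2) (use K in simp)
          qed
          thus ?thesis by blast
        next
          case False
          hence vb: "\<alpha>s n n0 = b" using vab by auto
          have "\<forall>k. 1 \<le> k \<and> k \<le> m \<longrightarrow> \<alpha>s n k = \<alpha>' k"
          proof (rule ccontr)
            assume "\<not> ?thesis"
            from first_diff[OF this] obtain K where K: "1 \<le> K" "K \<le> m" "\<forall>i. 1 \<le> i \<and> i < K \<longrightarrow> \<alpha>s n i = \<alpha>' i" "\<alpha>s n K \<noteq> \<alpha>' K"
              by blast
            have Kn: "n0 < K"
            proof (rule ccontr)
              assume "\<not> n0 < K"
              hence "K < n0 \<or> K = n0" by auto
              thus False using K agr1 vb a'n0 a'lt by fastforce
            qed
            have "\<exists>c\<in>A-{z}. (1/2)^(K+1) \<le> \<bar>coordN (\<alpha>s n) c - coordN \<alpha>' c\<bar>"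
              by (rule TC[where b=a]) (use K Kn a'a vA aIn in auto)
            thus False unfolding cm by (rule noc2) (use K in simp)
          qed
          thus ?thesis by blast
        qed
      qed
      then obtain N where N: "\<And>l. l \<ge> N \<Longrightarrow> (\<forall>k. 1 \<le> k \<and> k \<le> m \<longrightarrow> \<alpha>s l k = \<alpha> k) \<or> (\<forall>k. 1 \<le> k \<and> k \<le> m \<longrightarrow> \<alpha>s l k = \<alpha>' k)"
        unfolding eventually_sequentially by blast
      show "\<exists>lm\<ge>1. \<forall>l\<ge>lm.
                  ((\<forall>i. 1 \<le> i \<and> i \<le> n0 - 1 \<longrightarrow> \<alpha>s l i = \<alpha> i) \<and> \<alpha>s l n0 = a
                     \<and> (\<forall>i. n0 + 1 \<le> i \<and> i \<le> m \<longrightarrow> \<alpha>s l i = b))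
                \<or> ((\<forall>i. 1 \<le> i \<and> i \<le> n0 - 1 \<longrightarrow> \<alpha>s l i = \<alpha> i) \<and> \<alpha>s l n0 = b
                     \<and> (\<forall>i. n0 + 1 \<le> i \<and> i \<le> m \<longrightarrow> \<alpha>s l i = a))"
      proof (intro exI[of _ "max N 1"] conjI allI impI)
        fix l assume "max N 1 \<le> l"
        hence "l \<ge> N" by simp
        from N[OF this] show "((\<forall>i. 1 \<le> i \<and> i \<le> n0 - 1 \<longrightarrow> \<alpha>s l i = \<alpha> i) \<and> \<alpha>s l n0 = a
                     \<and> (\<forall>i. n0 + 1 \<le> i \<and> i \<le> m \<longrightarrow> \<alpha>s l i = b))
                \<or> ((\<forall>i. 1 \<le> i \<and> i \<le> n0 - 1 \<longrightarrow> \<alpha>s l i = \<alpha> i) \<and> \<alpha>s l n0 = b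
                     \<and> (\<forall>i. n0 + 1 \<le> i \<and> i \<le> m \<longrightarrow> \<alpha>s l i = a))"
          using condA[of m l] condB[of m l] m by auto
      qed simp
    qed
  next
    assume R: ?R
    show ?L
    proof (rule coord_to_norm[OF p, where W="{\<alpha>, \<alpha>'}"])
      fix M
      define m where "m = max M (n0 + 2)"
      have m: "n0 + 1 < m" "M \<le> m" unfolding m_def by auto
      obtain lm where lm: "\<forall>l\<ge>lm.
                  ((\<forall>i. 1 \<le> i \<and> i \<le> n0 - 1 \<longrightarrow> \<alpha>s l i = \<alpha> i) \<and> \<alpha>s l n0 = a
                     \<and> (\<forall>i. n0 + 1 \<le> i \<and> i \<le> m \<longrightarrow> \<alpha>s l i = b))
                \<or> ((\<forall>i. 1 \<le> i \<and> i \<le> n0 - 1 \<longrightarrow> \<alpha>s l i = \<alpha> i) \<and> \<alpha>s l n0 = b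
                     \<and> (\<forall>i. n0 + 1 \<le> i \<and> i \<le> m \<longrightarrow> \<alpha>s l i = a))"
        using R m(1) by blast
      show "eventually (\<lambda>n. \<exists>w'\<in>{\<alpha>, \<alpha>'}. \<forall>k. 1 \<le> k \<and> k \<le> M \<longrightarrow> \<alpha>s n k = w' k) sequentially"
        unfolding eventually_sequentially
      proof (intro exI[of _ lm] allI impI)
        fix l assume "lm \<le> l"
        hence "(\<forall>k. 1 \<le> k \<and> k \<le> m \<longrightarrow> \<alpha>s l k = \<alpha> k) \<or> (\<forall>k. 1 \<le> k \<and> k \<le> m \<longrightarrow> \<alpha>s l k = \<alpha>' k)"
          using lm condA[of m l] condB[of m l] m by auto
        thus "\<exists>w'\<in>{\<alpha>, \<alpha>'}. \<forall>k. 1 \<le> k \<and> k \<le> M \<longrightarrow> \<alpha>s l k = w' k"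
          using m(2) by auto
      qed
    next
      fix w' assume "w' \<in> {\<alpha>, \<alpha>'}"
      thus "pmap w' = pmap \<alpha>" using pm by auto
    qed
  qed
qed

theorem theorem3p1:
  fixes A :: "'a set" and z :: 'a and p :: real
    and \<alpha>s :: "nat \<Rightarrow> nat \<Rightarrow> 'a" and \<alpha> :: "nat \<Rightarrow> 'a"
  assumes "infinite A" and "z \<in> A" and "1 \<le> p"
    and "\<And>n. 1 \<le> n \<Longrightarrow> inN A (\<alpha>s n)"
    and "inN A \<alpha>"
  shows "((\<forall>q\<ge>1. \<not> (\<forall>k\<ge>q. \<alpha> k = \<alpha> q)) \<longrightarrow>
           (((\<lambda>n. lp_norm p (A - {z}) (\<lambda>c. pmap (\<alpha>s n) c - pmap \<alpha> c)) \<longlonglongrightarrow> 0)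
            \<longleftrightarrow> ((\<lambda>n. dN (\<alpha>s n) \<alpha>) \<longlonglongrightarrow> 0)))
       \<and> (\<forall>n0 a b. 2 \<le> n0 \<and> a \<in> A \<and> b \<in> A \<and> a \<noteq> b \<and> \<alpha> n0 = a
               \<and> (\<forall>k>n0. \<alpha> k = b) \<longrightarrow>
           (((\<lambda>n. lp_norm p (A - {z}) (\<lambda>c. pmap (\<alpha>s n) c - pmap \<alpha> c)) \<longlonglongrightarrow> 0)
            \<longleftrightarrow> (\<forall>m. m > n0 + 1 \<longrightarrow> (\<exists>lm\<ge>1. \<forall>l\<ge>lm.
                  ((\<forall>i. 1 \<le> i \<and> i \<le> n0 - 1 \<longrightarrow> \<alpha>s l i = \<alpha> i) \<and> \<alpha>s l n0 = a
                     \<and> (\<forall>i. n0 + 1 \<le> i \<and> i \<le> m \<longrightarrow> \<alpha>s l i = b))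
                \<or> ((\<forall>i. 1 \<le> i \<and> i \<le> n0 - 1 \<longrightarrow> \<alpha>s l i = \<alpha> i) \<and> \<alpha>s l n0 = b
                     \<and> (\<forall>i. n0 + 1 \<le> i \<and> i \<le> m \<longrightarrow> \<alpha>s l i = a))))))"
proof (intro conjI impI allI)
  assume "\<forall>q\<ge>1. \<not> (\<forall>k\<ge>q. \<alpha> k = \<alpha> q)"
  thus "(((\<lambda>n. lp_norm p (A - {z}) (\<lambda>c. pmap (\<alpha>s n) c - pmap \<alpha> c)) \<longlonglongrightarrow> 0)
            \<longleftrightarrow> ((\<lambda>n. dN (\<alpha>s n) \<alpha>) \<longlonglongrightarrow> 0))"
    by (intro part1[OF assms(3,4,5)]) auto
next
  fix n0 a b
  assume H: "2 \<le> n0 \<and> a \<in> A \<and> b \<in> A \<and> a \<noteq> b \<and> \<alpha> n0 = a \<and> (\<forall>k>n0. \<alpha> k = b)"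
  show "(((\<lambda>n. lp_norm p (A - {z}) (\<lambda>c. pmap (\<alpha>s n) c - pmap \<alpha> c)) \<longlonglongrightarrow> 0)
            \<longleftrightarrow> (\<forall>m. m > n0 + 1 \<longrightarrow> (\<exists>lm\<ge>1. \<forall>l\<ge>lm.
                  ((\<forall>i. 1 \<le> i \<and> i \<le> n0 - 1 \<longrightarrow> \<alpha>s l i = \<alpha> i) \<and> \<alpha>s l n0 = a
                     \<and> (\<forall>i. n0 + 1 \<le> i \<and> i \<le> m \<longrightarrow> \<alpha>s l i = b))
                \<or> ((\<forall>i. 1 \<le> i \<and> i \<le> n0 - 1 \<longrightarrow> \<alpha>s l i = \<alpha> i) \<and> \<alpha>s l n0 = b
                     \<and> (\<forall>i. n0 + 1 \<le> i \<and> i \<le> m \<longrightarrow> \<alpha>s l i = a)))))"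
    using H by (intro part2[OF assms(3,4,5)]) auto
qed

end
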